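(* Consider online binary classification with abstention with $d$ experts, and suppose the abstention costs satisfy $0\le c_t$ and $\max_t c_t<\frac12$. Then AdaHedge with abstention guarantees, for every expert $i\in\{1,\dots,d\}$, $$\sum_{t=1}^T\big((1-b_t)\ell_t(y_t^\star)+b_tc_t\big)\le\sum_{t=1}^T\ell_t(y_t^i)+\min\Big\{\frac{\ln d}{1-2\max_tc_t},\ 2\sqrt{\ln d\sum_{t=1}^Tv_t}\Big\}+\frac43\ln d+2,$$ where $v_t=\mathbb E_{i\sim\hat{\mathbf p}_t}\big[(\ell_t(\hat y_t)-\ell_t(y_t^i))^2\big]$.
   Context: Online classification with abstention: in each round $t=1,\dots,T$, the learner observes expert predictions $y_t^1,\dots,y_t^d\in[-1,1]$, predicts $y'_t\in[-1,1]\cup\{*\}$ ($*$ = abstain), the environment reveals $y_t\in\{-1,1\}$ and an abstention cost $c_t$, and the learner suffers $\ell_t(y'_t)=\frac12(1-y_ty'_t)$ if $y'_t\in[-1,1]$ and $c_t$ if $y'_t=*$. For expert $i$ its loss is $\ell_t(y_t^i)=\frac12(1-y_ty_t^i)\in[0,1]$. AdaHedge: with $L_{t,i}=\sum_{s<t}\ell_s(y_s^i)$, weights $\hat p_{t,i}\propto\exp(-\eta_tL_{t,i})$, where $\eta_t=\ln d/\Delta_{t-1}$ (and for $\Delta_{t-1}=0$ the weights are uniform over the experts minimizing $L_{t,i}$), $\Delta_t=\sum_{s\le t}\delta_s$, $\delta_s=h_s-m_s$, $h_s=\sum_i\hat p_{s,i}\ell_s(y_s^i)$, $m_s=-\frac1{\eta_s}\ln\sum_i\hat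 p_{s,i}e^{-\eta_s\ell_s(y_s^i)}$ (with $m_s=\min_{i:\hat p_{s,i}>0}\ell_s(y_s^i)$ when $\eta_s=\infty$). AdaHedge with abstention (Algorithm 2): in round $t$ obtain $\hat{\mathbf p}_t$ from AdaHedge, set $\hat y_t=\sum_i\hat p_{t,i}y_t^i$, $y_t^\star=\mathrm{sign}(\hat y_t)$, $b_t=1-|\hat y_t|$; predict $y'_t=y_t^\star$ with probability $1-b_t$ and abstain with probability $b_t$; then feed the expert losses $\ell_t(y_t^i)$ to AdaHedge. The quantity $(1-b_t)\ell_t(y_t^\star)+b_tc_t$ is the learner's expected loss in round $t$. *)

theory Defs
  imports Complex_Main
begin

text \<open>Rounds are indexed t = 0,...,T-1 (paper: 1..T); experts i = 0,...,d-1 (paper: 1..d).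
  y t : revealed label, ex t i : prediction of expert i in round t, c t : abstention cost.\<close>

definition loss :: "real \<Rightarrow> real \<Rightarrow> real" where
  "loss yt p = (1 - yt * p) / 2"

definition cumloss :: "(nat \<Rightarrow> real) \<Rightarrow> (nat \<Rightarrow> nat \<Rightarrow> real) \<Rightarrow> nat \<Rightarrow> nat \<Rightarrow> real" where
  "cumloss y ex t i = (\<Sum>s<t. loss (y s) (ex s i))"

text \<open>AdaHedge weights in round t, given the current value D of the cumulative mixability gap
  (eta = ln d / D; D = 0 means eta = infinity: uniform over the leaders).\<close>
definition ah_weights :: "nat \<Rightarrow> (nat \<Rightarrow> real) \<Rightarrow> (nat \<Rightarrow> nat \<Rightarrow> real) \<Rightarrow> real \<Rightarrow> nat \<Rightarrow> nat \<Rightarrow> real" where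
  "ah_weights d y ex D t i =
    (if D = 0 then
       (let M = {j \<in> {..<d}. cumloss y ex t j = Min (cumloss y ex t ` {..<d})}
        in if i \<in> M then 1 / real (card M) else 0)
     else
       (let eta = ln (real d) / D
        in if i < d then exp (- eta * cumloss y ex t i) / (\<Sum>j<d. exp (- eta * cumloss y ex t j))
           else 0))"

definition ah_gap :: "nat \<Rightarrow> (nat \<Rightarrow> real) \<Rightarrow> (nat \<Rightarrow> nat \<Rightarrow> real) \<Rightarrow> real \<Rightarrow> nat \<Rightarrow> real" where
  "ah_gap d y ex D t =
    (let p = ah_weights d y ex D t;
         h = (\<Sum>i<d. p i * loss (y t) (ex t i));
         m = (if D = 0 then Min {loss (y t) (ex t i) | i. i < d \<and> p i > 0}
              else (let eta = ln (real d) / D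
                    in - (1 / eta) * ln (\<Sum>i<d. p i * exp (- eta * loss (y t) (ex t i)))))
     in h - m)"

primrec ah_Delta :: "nat \<Rightarrow> (nat \<Rightarrow> real) \<Rightarrow> (nat \<Rightarrow> nat \<Rightarrow> real) \<Rightarrow> nat \<Rightarrow> real" where
  "ah_Delta d y ex 0 = 0"
| "ah_Delta d y ex (Suc t) = ah_Delta d y ex t + ah_gap d y ex (ah_Delta d y ex t) t"

definition ah_p :: "nat \<Rightarrow> (nat \<Rightarrow> real) \<Rightarrow> (nat \<Rightarrow> nat \<Rightarrow> real) \<Rightarrow> nat \<Rightarrow> nat \<Rightarrow> real" where
  "ah_p d y ex t i = ah_weights d y ex (ah_Delta d y ex t) t i"

definition yhat :: "nat \<Rightarrow> (nat \<Rightarrow> real) \<Rightarrow> (nat \<Rightarrow> nat \<Rightarrow> real) \<Rightarrow> nat \<Rightarrow> real" where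
  "yhat d y ex t = (\<Sum>i<d. ah_p d y ex t i * ex t i)"

definition ystar :: "nat \<Rightarrow> (nat \<Rightarrow> real) \<Rightarrow> (nat \<Rightarrow> nat \<Rightarrow> real) \<Rightarrow> nat \<Rightarrow> real" where
  "ystar d y ex t = sgn (yhat d y ex t)"

definition abst :: "nat \<Rightarrow> (nat \<Rightarrow> real) \<Rightarrow> (nat \<Rightarrow> nat \<Rightarrow> real) \<Rightarrow> nat \<Rightarrow> real" where
  "abst d y ex t = 1 - \<bar>yhat d y ex t\<bar>"

definition vt :: "nat \<Rightarrow> (nat \<Rightarrow> real) \<Rightarrow> (nat \<Rightarrow> nat \<Rightarrow> real) \<Rightarrow> nat \<Rightarrow> real" where
  "vt d y ex t = (\<Sum>i<d. ah_p d y ex t i * (loss (y t) (yhat d y ex t) - loss (y t) (ex t i))^2)"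

end

theory Submission
  imports Defs "HOL-Analysis.Analysis"
begin



lemma pade_deriv:
  fixes z :: real assumes "z < 3"
  shows "((\<lambda>x. ln (6+4*x+x^2) - ln (6-2*x) - x) has_real_derivative
     2*z^3/((6+4*z+z^2)*(6-2*z))) (at z)"
proof -
  have p1: "6+4*z+z^2 > 0" proof - have "6+4*z+z^2 = (z+2)^2 + 2" by (simp add: power2_eq_square algebra_simps) thus ?thesis by (metis add_pos_nonneg zero_le_power2 zero_less_numeral add.commute) qed
  have p2: "6-2*z > 0" using assms by simp
  have "((\<lambda>x. ln (6+4*x+x^2) - ln (6-2*x) - x) has_real_derivative
     (4+2*z)/(6+4*z+z^2) - (-2)/(6-2*z) - 1) (at z)"
    by (rule derivative_eq_intros refl | use p1 p2 in \<open>simp_all\<close>)+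
  moreover have "(4+2*z)/(6+4*z+z^2) - (-2)/(6-2*z) - 1 = 2*z^3/((6+4*z+z^2)*(6-2*z))"
  proof -
    define A where "A = 6+4*z+z^2"
    define B where "B = 6-2*z"
    have A: "A > 0" "B > 0" using p1 p2 by (auto simp: A_def B_def)
    have "(4+2*z)/A - (-2)/B - 1 = ((4+2*z)*B + 2*A - A*B)/(A*B)"
      using A by (simp add: field_simps)
    also have "(4+2*z)*B + 2*A - A*B = 2*z^3" unfolding A_def B_def
      by (simp add: algebra_simps power2_eq_square power3_eq_cube)
    finally show ?thesis unfolding A_def B_def .
  qed
  ultimately show ?thesis by simp
qed

lemma pade_exp:
  fixes x :: real assumes "x < 3"
  shows "exp x \<le> (6+4*x+x^2)/(6-2*x)"
proof -
  define g where "g = (\<lambda>x::real. ln (6+4*x+x^2) - ln (6-2*x) - x)"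
  have p1: "6+4*x+x^2 > 0" proof - have "6+4*x+x^2 = (x+2)^2 + 2" by (simp add: power2_eq_square algebra_simps) thus ?thesis by (metis add_pos_nonneg zero_le_power2 zero_less_numeral add.commute) qed
  have p2: "6-2*x > 0" using assms by simp
  have g0: "g 0 = 0" by (simp add: g_def)
  have "g x \<ge> 0"
  proof (cases "x \<ge> 0")
    case True
    have "g 0 \<le> g x"
    proof (rule DERIV_nonneg_imp_nondecreasing[OF True])
      fix z :: real assume z: "0 \<le> z" "z \<le> x"
      have q1: "6+4*z+z^2 > 0" using z by (simp add: add_pos_nonneg)
      have q2: "6-2*z > 0" using z assms by simp
      show "\<exists>y. DERIV g z :> y \<and> y \<ge> 0"
        using pade_deriv[of z] z assms q1 q2 unfolding g_def
        by (intro exI[of _ "2*z^3/((6+4*z+z^2)*(6-2*z))"]) auto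
    qed
    then show ?thesis using g0 by simp
  next
    case False
    have "g x \<ge> g 0"
    proof (rule DERIV_nonpos_imp_nonincreasing[of x 0 g])
      show "x \<le> 0" using False by simp
      fix z :: real assume z: "x \<le> z" "z \<le> 0"
      have q1: "6+4*z+z^2 > 0" proof - have "6+4*z+z^2 = (z+2)^2 + 2" by (simp add: power2_eq_square algebra_simps) thus ?thesis by (metis add_pos_nonneg zero_le_power2 zero_less_numeral add.commute) qed
      have q2: "6-2*z > 0" using z by simp
      have "z^3 \<le> 0" using z by (simp add: power_le_zero_eq)
      hence "2*z^3/((6+4*z+z^2)*(6-2*z)) \<le> 0" using q1 q2 by (simp add: divide_nonpos_pos)
      then show "\<exists>y. DERIV g z :> y \<and> y \<le> 0"
        using pade_deriv[of z] z unfolding g_def by auto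
    qed
    then show ?thesis using g0 by simp
  qed
  hence "x \<le> ln ((6+4*x+x^2)/(6-2*x))" using p1 p2 by (simp add: g_def ln_div)
  thus ?thesis using p1 p2 by (metis divide_pos_pos exp_le_cancel_iff exp_ln)
qed




lemma pade_exp2:
  fixes x e :: real assumes "x \<le> e" "e < 3"
  shows "exp x \<le> 1 + x + 3/(6-2*e) * x^2"
proof -
  have "exp x \<le> (6+4*x+x^2)/(6-2*x)" using pade_exp assms by simp
  also have "\<dots> = 1 + x + 3*x^2/(6-2*x)" using assms by (simp add: field_simps) (simp add: algebra_simps power2_eq_square)
  also have "3*x^2/(6-2*x) \<le> 3/(6-2*e) * x^2"
  proof -
    have "3*x^2/(6-2*x) = 3/(6-2*x) * x^2" by simp
    also have "\<dots> \<le> 3/(6-2*e) * x^2"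
      using assms by (intro mult_right_mono divide_left_mono) auto
    finally show ?thesis .
  qed
  finally show ?thesis by simp
qed

lemma gap_eta:
  fixes p l :: "nat \<Rightarrow> real" and n :: nat and eta :: real
  assumes eta: "eta > 0" and p0: "\<forall>i<n. 0 \<le> p i" and p1: "(\<Sum>i<n. p i) = 1"
    and l01: "\<forall>i<n. 0 \<le> l i \<and> l i \<le> 1"
  shows "0 \<le> (\<Sum>i<n. p i * l i) - (- (1/eta) * ln (\<Sum>i<n. p i * exp (- eta * l i)))
    \<and> (\<Sum>i<n. p i * l i) - (- (1/eta) * ln (\<Sum>i<n. p i * exp (- eta * l i))) \<le> 1
    \<and> ((\<Sum>i<n. p i * l i) - (- (1/eta) * ln (\<Sum>i<n. p i * exp (- eta * l i)))) * (1 - eta/3)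
       \<le> eta * (\<Sum>i<n. p i * ((\<Sum>i<n. p i * l i) - l i)^2) / 2"
proof -
  define h where "h = (\<Sum>i<n. p i * l i)"
  define v where "v = (\<Sum>i<n. p i * (h - l i)^2)"
  define E where "E = (\<Sum>i<n. p i * exp (eta * (h - l i)))"
  have h01: "0 \<le> h \<and> h \<le> 1"
  proof -
    have "h \<le> (\<Sum>i<n. p i * 1)" unfolding h_def using p0 l01 by (intro sum_mono mult_left_mono) auto
    moreover have "0 \<le> h" unfolding h_def using p0 l01 by (intro sum_nonneg) auto
    ultimately show ?thesis using p1 by simp
  qed
  have sumX: "(\<Sum>i<n. p i * (h - l i)) = 0"
    by (simp add: right_diff_distrib sum_subtractf sum_distrib_right[symmetric] p1 h_def)
  have E1: "E \<ge> 1"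
  proof -
    have "(\<Sum>i<n. p i * (1 + eta * (h - l i))) \<le> E" unfolding E_def
      using p0 by (intro sum_mono mult_left_mono) auto
    moreover have "(\<Sum>i<n. p i * (1 + eta * (h - l i))) = (\<Sum>i<n. p i) + eta * (\<Sum>i<n. p i * (h - l i))"
    proof -
      have "\<And>i. p i * (1 + eta * (h - l i)) = p i + eta * (p i * (h - l i))" by (simp add: algebra_simps)
      thus ?thesis by (simp only: sum.distrib flip: sum_distrib_left)
    qed
    moreover note sumX p1
    ultimately show ?thesis by simp
  qed
  have Eexp: "E \<le> exp eta"
  proof -
    have "E \<le> (\<Sum>i<n. p i * exp eta)" unfolding E_def
      using p0 l01 h01 eta by (intro sum_mono mult_left_mono) auto
    thus ?thesis using p1 by (simp add: sum_distrib_right[symmetric])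
  qed
  have split: "(\<Sum>i<n. p i * exp (- eta * l i)) = exp (- eta * h) * E"
    unfolding E_def sum_distrib_left
    by (intro sum.cong refl) (simp add: mult_exp_exp algebra_simps)
  have lnE: "ln (\<Sum>i<n. p i * exp (- eta * l i)) = - eta * h + ln E"
    using E1 unfolding split by (simp add: ln_mult)
  have delta: "h - (- (1/eta) * ln (\<Sum>i<n. p i * exp (- eta * l i))) = ln E / eta"
    using eta unfolding lnE by (simp add: field_simps)
  have d0: "0 \<le> ln E / eta" using E1 eta by simp
  have d1: "ln E / eta \<le> 1"
  proof -
    have "ln E \<le> eta" using Eexp E1 by (metis ln_exp ln_le_cancel_iff less_le_trans zero_less_one)
    thus ?thesis using eta by simp
  qed
  have d2: "ln E / eta * (1 - eta/3) \<le> eta * v / 2"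
  proof (cases "eta < 3")
    case False
    hence "ln E / eta * (1 - eta/3) \<le> 0" using d0 by (intro mult_nonneg_nonpos) auto
    moreover have "0 \<le> eta * v / 2" unfolding v_def using eta p0 by (intro divide_nonneg_pos mult_nonneg_nonneg sum_nonneg) auto
    ultimately show ?thesis by linarith
  next
    case True
    define K where "K = 3/(6-2*eta)"
    have K0: "K > 0" using True by (simp add: K_def)
    have "E \<le> (\<Sum>i<n. p i * (1 + eta * (h - l i) + K * (eta * (h - l i))^2))"
      unfolding E_def K_def
      using p0 l01 h01 eta True by (intro sum_mono mult_left_mono pade_exp2) auto
    also have "\<dots> = (\<Sum>i<n. p i) + eta * (\<Sum>i<n. p i * (h - l i)) + K * eta^2 * v"
    proof -
      have "\<And>i. p i * (1 + eta * (h - l i) + K * (eta * (h - l i))^2) = p i + eta * (p i * (h - l i)) + K * eta^2 * (p i * (h - l i)^2)"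
        by (simp add: algebra_simps power2_eq_square)
      thus ?thesis unfolding v_def by (simp only: sum.distrib flip: sum_distrib_left)
    qed
    also have "\<dots> = 1 + K * eta^2 * v" using p1 sumX by simp
    finally have "E \<le> 1 + K * eta^2 * v" .
    hence "ln E \<le> K * eta^2 * v" using ln_le_minus_one[of E] E1 by simp
    hence "ln E / eta \<le> K * eta * v" using eta by (simp add: divide_le_eq power2_eq_square algebra_simps)
    hence "ln E / eta * (1 - eta/3) \<le> K * eta * v * (1 - eta/3)"
      using True by (intro mult_right_mono) auto
    also have "K * eta * v * (1 - eta/3) = eta * v / 2" using True by (simp add: K_def field_simps)
    finally show ?thesis .
  qed
  show ?thesis using delta d0 d1 d2 unfolding h_def[symmetric] v_def[symmetric] by simp
qed




definition Phi :: "nat \<Rightarrow> (nat \<Rightarrow> real) \<Rightarrow> real \<Rightarrow> real" where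
  "Phi n L a = - (1/a) * ln ((\<Sum>j<n. exp (- a * L j)) / real n)"

lemma phi_mono:
  assumes n: "n > 0" and ab: "0 < a" "a \<le> b"
  shows "Phi n L b \<le> Phi n L a"
proof -
  define w where "w j = exp (- a * L j)" for j
  define r where "r = b / a"
  have r1: "r \<ge> 1" using ab by (simp add: r_def)
  have wr: "exp (- b * L j) = w j powr r" for j
    unfolding w_def r_def exp_powr_real using ab by (simp add: field_simps)
  have C: "(\<lambda>x. x powr r) (\<Sum>j<n. (1/real n) *\<^sub>R w j) \<le> (\<Sum>j<n. (1/real n) * (\<lambda>x. x powr r) (w j))"
    by (rule convex_on_sum[where C="{0<..}"]) (use n r1 powr_convex in \<open>auto simp: w_def\<close>)
  hence J: "((\<Sum>j<n. w j) / real n) powr r \<le> (\<Sum>j<n. exp (- b * L j)) / real n"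
  proof -
    have e1: "(\<Sum>j<n. (1/real n) *\<^sub>R w j) = (\<Sum>j<n. w j) / real n"
      unfolding real_scaleR_def sum_divide_distrib by (rule sum.cong) auto
    have e2: "(\<Sum>j<n. (1/real n) * (\<lambda>x. x powr r) (w j)) = (\<Sum>j<n. exp (- b * L j)) / real n"
      unfolding sum_divide_distrib by (rule sum.cong[OF refl]) (simp only: wr, simp)
    show ?thesis using C unfolding e1 e2 .
  qed
  have A0: "(\<Sum>j<n. w j) / real n > 0" using n by (intro divide_pos_pos sum_pos) (auto simp: w_def)
  have "r * ln ((\<Sum>j<n. w j) / real n) \<le> ln ((\<Sum>j<n. exp (- b * L j)) / real n)"
  proof -
    have B0: "(\<Sum>j<n. exp (- b * L j)) / real n > 0" using n by (intro divide_pos_pos sum_pos) auto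
    have "ln (((\<Sum>j<n. w j) / real n) powr r) \<le> ln ((\<Sum>j<n. exp (- b * L j)) / real n)"
      using J A0 B0 n by (subst ln_le_cancel_iff) auto
    thus ?thesis by simp
  qed
  hence "- (1/b) * ln ((\<Sum>j<n. exp (- b * L j)) / real n) \<le> - (1/b) * (r * ln ((\<Sum>j<n. w j) / real n))"
    using ab by (intro mult_left_mono_neg) auto
  also have "\<dots> = - (1/a) * ln ((\<Sum>j<n. w j) / real n)" using ab by (simp add: r_def)
  finally show ?thesis unfolding Phi_def w_def .
qed

lemma phi_min:
  assumes n: "n > 0" and a: "0 < a"
  shows "Min (L ` {..<n}) \<le> Phi n L a"
proof -
  define mn where "mn = Min (L ` {..<n})"
  have mn: "mn \<le> L j" if "j < n" for j unfolding mn_def using that by auto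
  have "(\<Sum>j<n. exp (- a * L j)) \<le> (\<Sum>j<n. exp (- a * mn))"
    using mn a by (intro sum_mono) auto
  hence "(\<Sum>j<n. exp (- a * L j)) / real n \<le> exp (- a * mn)" using n by (simp add: divide_le_eq mult.commute)
  moreover have "(\<Sum>j<n. exp (- a * L j)) / real n > 0" using n by (intro divide_pos_pos sum_pos) auto
  ultimately have "ln ((\<Sum>j<n. exp (- a * L j)) / real n) \<le> - a * mn"
    by (metis ln_exp ln_le_cancel_iff exp_gt_zero)
  hence "- (1/a) * ln ((\<Sum>j<n. exp (- a * L j)) / real n) \<ge> - (1/a) * (- a * mn)"
    using a by (intro mult_left_mono_neg) auto
  thus ?thesis using a unfolding Phi_def mn_def by simp
qed

lemma phi_upper:
  assumes i: "i < n" and a: "0 < a"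
  shows "Phi n L a \<le> L i + ln (real n) / a"
proof -
  have n: "n > 0" using i by simp
  have "exp (- a * L i) \<le> (\<Sum>j<n. exp (- a * L j))"
    using i by (intro member_le_sum) auto
  hence "exp (- a * L i) / real n \<le> (\<Sum>j<n. exp (- a * L j)) / real n"
    using n by (simp add: divide_right_mono)
  hence "ln (exp (- a * L i) / real n) \<le> ln ((\<Sum>j<n. exp (- a * L j)) / real n)"
    using n by (subst ln_le_cancel_iff) (auto intro!: divide_pos_pos sum_pos)
  hence "- a * L i - ln (real n) \<le> ln ((\<Sum>j<n. exp (- a * L j)) / real n)"
    using n by (simp add: ln_div)
  hence "- (1/a) * ln ((\<Sum>j<n. exp (- a * L j)) / real n) \<le> - (1/a) * (- a * L i - ln (real n))"
    using a by (intro mult_left_mono_neg) auto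
  also have "- (1/a) * (- a * L i - ln (real n)) = L i + ln (real n) / a" using a by (simp add: field_simps)
  finally show ?thesis unfolding Phi_def .
qed

lemma phi_zero: "n > 0 \<Longrightarrow> Phi n (\<lambda>_. 0) a = 0"
  by (simp add: Phi_def)




definition Psi :: "nat \<Rightarrow> (nat \<Rightarrow> real) \<Rightarrow> real \<Rightarrow> real" where
  "Psi d L Dv = (if Dv = 0 then Min (L ` {..<d}) else Phi d L (ln (real d) / Dv))"

lemma loss01:
  assumes "yt \<in> {-1, 1}" "x \<in> {-1..1}"
  shows "0 \<le> loss yt x \<and> loss yt x \<le> 1"
  using assms by (auto simp: loss_def)

lemma cumloss_Suc: "cumloss y ex (Suc t) i = cumloss y ex t i + loss (y t) (ex t i)"
  by (simp add: cumloss_def)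

lemma cumloss_0: "cumloss y ex 0 i = 0"
  by (simp add: cumloss_def)

definition tied :: "nat \<Rightarrow> (nat \<Rightarrow> real) \<Rightarrow> (nat \<Rightarrow> nat \<Rightarrow> real) \<Rightarrow> nat \<Rightarrow> bool" where
  "tied d y ex t = (\<forall>i<d. cumloss y ex t i = cumloss y ex t 0)"

lemma weights_tied:
  assumes "tied d y ex t" "d \<ge> 1"
  shows "ah_weights d y ex 0 t i = (if i < d then 1 / real d else 0)"
proof -
  have T: "\<And>j. j < d \<Longrightarrow> cumloss y ex t j = cumloss y ex t 0" using assms(1) unfolding tied_def by blast
  have im: "cumloss y ex t ` {..<d} = {cumloss y ex t 0}"
  proof
    show "cumloss y ex t ` {..<d} \<subseteq> {cumloss y ex t 0}" using T by blast
    show "{cumloss y ex t 0} \<subseteq> cumloss y ex t ` {..<d}" using assms(2) by force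
  qed
  have M: "{j \<in> {..<d}. cumloss y ex t j = Min (cumloss y ex t ` {..<d})} = {..<d}"
    unfolding im using T by auto
  show ?thesis unfolding ah_weights_def Let_def M by simp
qed

lemma weights_pos:
  assumes "Dv \<noteq> 0"
  shows "ah_weights d y ex Dv t i = (if i < d then exp (- (ln (real d) / Dv) * cumloss y ex t i)
      / (\<Sum>j<d. exp (- (ln (real d) / Dv) * cumloss y ex t j)) else 0)"
  using assms unfolding ah_weights_def by (simp add: Let_def)

lemma weights_prob:
  assumes "Dv \<noteq> 0 \<or> (Dv = 0 \<and> tied d y ex t)" "d \<ge> 1"
  shows "(\<forall>i. 0 \<le> ah_weights d y ex Dv t i) \<and> (\<Sum>i<d. ah_weights d y ex Dv t i) = 1"
proof (cases "Dv = 0")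
  case True
  then show ?thesis using assms weights_tied[of d y ex t] by simp
next
  case False
  have S: "(\<Sum>j<d. exp (- (ln (real d) / Dv) * cumloss y ex t j)) > 0"
    using assms by (intro sum_pos) (auto simp: lessThan_empty_iff)
  show ?thesis using False S
    by (auto simp: weights_pos sum_divide_distrib[symmetric])
qed

lemma gap_unfold:
  "ah_gap d y ex Dv t = (\<Sum>i<d. ah_weights d y ex Dv t i * loss (y t) (ex t i)) -
     (if Dv = 0 then Min {loss (y t) (ex t i) | i. i < d \<and> ah_weights d y ex Dv t i > 0}
      else - (1 / (ln (real d) / Dv)) * ln (\<Sum>i<d. ah_weights d y ex Dv t i * exp (- (ln (real d) / Dv) * loss (y t) (ex t i))))"
  unfolding ah_gap_def Let_def by simp




lemma round_facts:
  assumes yt: "y t \<in> {-1,1}" and ext: "\<forall>j<d. ex t j \<in> {-1..1}" and d1: "d \<ge> 1"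
    and D0: "0 \<le> Dv" and Dz: "Dv = 0 \<Longrightarrow> tied d y ex t" and Dp: "Dv \<noteq> 0 \<Longrightarrow> d \<ge> 2"
  defines "w \<equiv> ah_weights d y ex Dv t"
  defines "h \<equiv> (\<Sum>i<d. w i * loss (y t) (ex t i))"
  defines "v \<equiv> (\<Sum>i<d. w i * (h - loss (y t) (ex t i))^2)"
  defines "g \<equiv> ah_gap d y ex Dv t"
  shows "0 \<le> g \<and> g \<le> 1 \<and> 2 * Dv * g \<le> ln (real d) * v + 2/3 * ln (real d) * g
    \<and> h - g \<le> Psi d (cumloss y ex (Suc t)) Dv - Psi d (cumloss y ex t) Dv
    \<and> (Dv = 0 \<and> g = 0 \<longrightarrow> tied d y ex (Suc t)) \<and> (Dv = 0 \<and> g \<noteq> 0 \<longrightarrow> d \<ge> 2)"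
proof -
  define ll where "ll i = loss (y t) (ex t i)" for i
  have l01: "\<forall>i<d. 0 \<le> ll i \<and> ll i \<le> 1" using loss01 yt ext unfolding ll_def by blast
  have wp: "(\<forall>i. 0 \<le> w i) \<and> (\<Sum>i<d. w i) = 1"
    unfolding w_def using weights_prob[of Dv d y ex t] Dz d1 by blast
  have v0: "0 \<le> v" unfolding v_def using wp by (intro sum_nonneg) auto
  have lnd: "0 \<le> ln (real d)" using d1 by simp
  show ?thesis
  proof (cases "Dv = 0")
    case True
    have tt: "tied d y ex t" using Dz True by blast
    obtain c0 where c0: "c0 = cumloss y ex t 0" by blast
    have T: "\<And>j. j < d \<Longrightarrow> cumloss y ex t j = c0" using tt c0 unfolding tied_def by blast
    have wi: "w i = 1 / real d" if "i < d" for i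
      unfolding w_def True using weights_tied[OF tt d1, of i] that by simp
    have set: "{loss (y t) (ex t i) | i. i < d \<and> w i > 0} = ll ` {..<d}"
      using wi d1 unfolding ll_def by (auto simp: image_def)
    define mn where "mn = Min (ll ` {..<d})"
    have fin: "finite (ll ` {..<d})" "ll ` {..<d} \<noteq> {}" using d1 by (auto simp: lessThan_empty_iff)
    have mnle: "mn \<le> ll i" if "i < d" for i unfolding mn_def using fin that by auto
    have mnin: "mn \<in> ll ` {..<d}" unfolding mn_def using fin by (rule Min_in)
    have mn0: "0 \<le> mn" using mnin l01 by auto
    have g_eq: "g = h - mn"
      unfolding g_def h_def mn_def gap_unfold[of d y ex Dv t] using True set
      by (simp add: w_def ll_def)
    have h_eq: "h = (\<Sum>i<d. ll i) / real d"
      unfolding h_def ll_def using wi by (simp add: sum_divide_distrib)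
    have hmn: "h \<ge> mn"
    proof -
      have "(\<Sum>i<d. mn) \<le> (\<Sum>i<d. ll i)" using mnle by (intro sum_mono) auto
      thus ?thesis using d1 h_eq by (simp add: le_divide_eq mult.commute)
    qed
    have h1: "h \<le> 1"
    proof -
      have "(\<Sum>i<d. ll i) \<le> (\<Sum>i<d. 1)" using l01 by (intro sum_mono) auto
      thus ?thesis using d1 h_eq by (simp add: divide_le_eq)
    qed
    have g01: "0 \<le> g \<and> g \<le> 1" using g_eq hmn h1 mn0 by simp
    have psi0: "Psi d (cumloss y ex t) Dv = c0"
    proof -
      have im: "cumloss y ex t ` {..<d} = {c0}"
      proof
        show "cumloss y ex t ` {..<d} \<subseteq> {c0}" using T by blast
        show "{c0} \<subseteq> cumloss y ex t ` {..<d}" using d1 T[of 0] by (auto intro!: image_eqI[of _ _ 0])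
      qed
      show ?thesis unfolding Psi_def using True im by simp
    qed
    have psi1: "c0 + mn \<le> Psi d (cumloss y ex (Suc t)) Dv"
    proof -
      have "c0 + mn \<le> Min (cumloss y ex (Suc t) ` {..<d})"
        using d1 mnle T by (subst Min_ge_iff) (auto simp: cumloss_Suc ll_def lessThan_empty_iff)
      thus ?thesis unfolding Psi_def using True by simp
    qed
    have tied1: "tied d y ex (Suc t)" if "g = 0"
    proof -
      have "(\<Sum>i<d. ll i - mn) = 0"
        using that g_eq h_eq d1 by (simp add: sum_subtractf field_simps)
      hence "\<forall>i\<in>{..<d}. ll i - mn = 0" using mnle by (subst sum_nonneg_eq_0_iff[symmetric]) auto
      hence "\<forall>i<d. cumloss y ex (Suc t) i = c0 + mn" using T by (auto simp: cumloss_Suc ll_def)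
      thus ?thesis unfolding tied_def using d1 by simp
    qed
    have dd: "d \<ge> 2" if "g \<noteq> 0"
    proof (rule ccontr)
      assume "\<not> d \<ge> 2"
      hence d1': "d = 1" using d1 by simp
      have "ll ` {..<d} = {ll 0}" using d1' by auto
      hence "mn = ll 0" unfolding mn_def by simp
      moreover have "h = ll 0" using h_eq d1' by simp
      ultimately show False using that g_eq by simp
    qed
    show ?thesis using g01 True v0 lnd psi0 psi1 g_eq tied1 dd
      by (auto intro!: add_nonneg_nonneg mult_nonneg_nonneg)
  next
    case False
    have Dpos: "Dv > 0" using False D0 by simp
    have d2: "d \<ge> 2" using Dp False by blast
    define eta where "eta = ln (real d) / Dv"
    have lnpos: "ln (real d) > 0" using d2 by simp
    have eta0: "eta > 0" unfolding eta_def using lnpos Dpos by simp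
    have Deta: "Dv * eta = ln (real d)" unfolding eta_def using Dpos by simp
    define m where "m = - (1/eta) * ln (\<Sum>i<d. w i * exp (- eta * ll i))"
    have g_eq: "g = h - m"
      unfolding g_def h_def m_def gap_unfold[of d y ex Dv t] using False
      by (simp add: w_def ll_def eta_def)
    have G: "0 \<le> h - m \<and> h - m \<le> 1 \<and> (h - m) * (1 - eta/3) \<le> eta * v / 2"
      using gap_eta[OF eta0, of d w ll] wp l01
      unfolding m_def h_def v_def ll_def by auto
    have B: "2 * Dv * g \<le> ln (real d) * v + 2/3 * ln (real d) * g"
    proof -
      have "2 * Dv * g - 2/3 * (Dv * eta) * g = 2 * Dv * ((h - m) * (1 - eta/3))"
        unfolding g_eq by (simp add: algebra_simps)
      also have "\<dots> \<le> 2 * Dv * (eta * v / 2)"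
        using G Dpos by (intro mult_left_mono) auto
      also have "\<dots> = (Dv * eta) * v" by simp
      finally have "2 * Dv * g - 2/3 * (Dv * eta) * g \<le> (Dv * eta) * v" .
      thus ?thesis unfolding Deta by simp
    qed
    define S where "S k = (\<Sum>j<d. exp (- eta * cumloss y ex k j))" for k
    have Spos: "S k > 0" for k unfolding S_def using d1 by (intro sum_pos) (auto simp: lessThan_empty_iff)
    have wform: "w i = exp (- eta * cumloss y ex t i) / S t" if "i < d" for i
      unfolding w_def S_def eta_def using weights_pos[OF False, of d y ex t i] that by simp
    have sum_eq: "(\<Sum>i<d. w i * exp (- eta * ll i)) = S (Suc t) / S t"
    proof -
      have "(\<Sum>i<d. w i * exp (- eta * ll i)) = (\<Sum>i<d. exp (- eta * cumloss y ex (Suc t) i) / S t)"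
        by (rule sum.cong[OF refl]) (simp add: wform cumloss_Suc ll_def distrib_left mult_exp_exp)
      thus ?thesis unfolding S_def by (simp add: sum_divide_distrib)
    qed
    have psi: "Psi d L Dv = - (1/eta) * ln (S' / real d)" if "S' = (\<Sum>j<d. exp (- eta * L j))" for L S'
      unfolding Psi_def Phi_def using False that eta_def by simp
    have "m = Psi d (cumloss y ex (Suc t)) Dv - Psi d (cumloss y ex t) Dv"
    proof -
      have "ln (S (Suc t) / S t) = ln (S (Suc t) / real d) - ln (S t / real d)"
      proof -
        have a: "S (Suc t) > 0" "S t > 0" "real d > 0" using Spos d1 by auto
        show ?thesis using a by (simp add: ln_div)
      qed
      note lneq = this
      show ?thesis unfolding m_def sum_eq psi[OF S_def[of "Suc t"]] psi[OF S_def[of t]] lneq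
        by (simp add: algebra_simps)
    qed
    thus ?thesis using G g_eq B False by simp
  qed
qed




lemma psi_mono:
  assumes d1: "d \<ge> 1" and D: "0 \<le> D1" "D1 \<le> D2" and d2: "D2 \<noteq> 0 \<Longrightarrow> d \<ge> 2"
  shows "Psi d L D1 \<le> Psi d L D2"
proof (cases "D1 = D2")
  case False
  hence D2p: "D2 > 0" "D2 \<noteq> 0" using D by auto
  have lnp: "ln (real d) > 0" using d2[OF D2p(2)] by simp
  show ?thesis
  proof (cases "D1 = 0")
    case True
    have "Min (L ` {..<d}) \<le> Phi d L (ln (real d) / D2)"
      using d1 lnp D2p by (intro phi_min) auto
    thus ?thesis unfolding Psi_def using True D2p by simp
  next
    case f1: False
    have "Phi d L (ln (real d) / D1) \<le> Phi d L (ln (real d) / D2)"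
      using d1 lnp D2p D f1 by (intro phi_mono) (auto intro!: divide_left_mono mult_pos_pos)
    thus ?thesis unfolding Psi_def using f1 D2p by simp
  qed
qed simp

lemma psi_upper:
  assumes D: "0 \<le> Dv" and d2: "Dv \<noteq> 0 \<Longrightarrow> d \<ge> 2" and i: "i < d"
  shows "Psi d L Dv \<le> L i + Dv"
proof (cases "Dv = 0")
  case True
  have "Min (L ` {..<d}) \<le> L i" using i by auto
  thus ?thesis unfolding Psi_def using True by simp
next
  case False
  have lnp: "ln (real d) > 0" using d2[OF False] by simp
  have "Phi d L (ln (real d) / Dv) \<le> L i + ln (real d) / (ln (real d) / Dv)"
    using i lnp D False by (intro phi_upper) auto
  thus ?thesis unfolding Psi_def using False lnp by simp
qed

lemma psi_zero0: "d \<ge> 1 \<Longrightarrow> Psi d (cumloss y ex 0) 0 = 0"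
proof -
  assume d1: "d \<ge> 1"
  have c: "cumloss y ex 0 = (\<lambda>_. 0)" by (rule ext) (simp add: cumloss_0)
  have "cumloss y ex 0 ` {..<d} = {0}" using d1 unfolding c by (simp add: image_constant_conv lessThan_empty_iff)
  thus ?thesis unfolding Psi_def by simp
qed

lemma sqrt_bound:
  fixes x a b :: real
  assumes "0 \<le> x" "0 \<le> a" "0 \<le> b" "x^2 \<le> a + b * x"
  shows "x \<le> sqrt a + b"
proof (cases "x \<le> b")
  case True thus ?thesis using real_sqrt_ge_zero[OF assms(2)] by linarith
next
  case False
  have "b * b \<le> b * x" using False assms by (intro mult_left_mono) auto
  hence "(x - b)^2 \<le> x * (x - b)" by (simp add: power2_eq_square algebra_simps)
  also have "\<dots> \<le> a" using assms by (simp add: power2_eq_square algebra_simps)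
  finally have "x - b \<le> sqrt a" using False by (metis real_le_rsqrt)
  thus ?thesis by simp
qed

lemma amgm_bound:
  fixes a x k :: real
  assumes "0 \<le> a" "0 \<le> x" "0 < k"
  shows "2 * sqrt (a * x) \<le> a / k + k * x"
proof -
  define u where "u = sqrt (a / k)"
  define w where "w = sqrt (k * x)"
  have "sqrt (a * x) = u * w" unfolding u_def w_def using assms
    by (simp add: real_sqrt_mult[symmetric])
  moreover have "u^2 = a / k" "w^2 = k * x" unfolding u_def w_def using assms by auto
  moreover have "0 \<le> (u - w)^2" by simp
  ultimately show ?thesis by (simp add: power2_eq_square algebra_simps)
qed

lemma abst_eq:
  fixes yt x c :: real
  assumes "yt \<in> {-1, 1}" "\<bar>x\<bar> \<le> 1"
  shows "(1 - (1 - \<bar>x\<bar>)) * loss yt (sgn x) + (1 - \<bar>x\<bar>) * c = loss yt x - (1 - \<bar>x\<bar>) * (1/2 - c)"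
  using assms by (cases "x > 0"; cases "x = 0"; auto simp: loss_def sgn_if field_simps)

lemma var_bound:
  fixes p l :: "nat \<Rightarrow> real" and yt x :: real
  assumes yt: "yt \<in> {-1, 1}" and p0: "\<forall>i<n. 0 \<le> p i" and p1: "(\<Sum>i<n. p i) = 1"
    and l01: "\<forall>i<n. 0 \<le> l i \<and> l i \<le> 1"
    and h: "(\<Sum>i<n. p i * l i) = loss yt x"
  shows "(\<Sum>i<n. p i * (loss yt x - l i)^2) \<le> (1 - \<bar>x\<bar>) / 2"
proof -
  define hh where "hh = loss yt x"
  have "(\<Sum>i<n. p i * (hh - l i)^2) = hh^2 * (\<Sum>i<n. p i) - 2 * hh * (\<Sum>i<n. p i * l i) + (\<Sum>i<n. p i * (l i)^2)"
  proof -
    have "\<And>i. p i * (hh - l i)^2 = hh^2 * p i - 2 * hh * (p i * l i) + p i * (l i)^2"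
      by (simp add: power2_eq_square algebra_simps)
    thus ?thesis by (simp only: sum.distrib sum_subtractf flip: sum_distrib_left)
  qed
  also have "\<dots> = (\<Sum>i<n. p i * (l i)^2) - hh^2" using p1 h unfolding hh_def by (simp add: power2_eq_square)
  also have "\<dots> \<le> (\<Sum>i<n. p i * l i) - hh^2"
  proof -
    have "\<forall>i<n. (l i)^2 \<le> l i" using l01 by (auto simp: power2_eq_square intro: mult_left_le_one_le)
    thus ?thesis using p0 by (intro diff_right_mono sum_mono mult_left_mono) auto
  qed
  also have "\<dots> = hh - hh^2" using h unfolding hh_def by simp
  also have "\<dots> = (1 - x^2) / 4" using yt unfolding hh_def loss_def by (auto simp: power2_eq_square field_simps)
  also have "\<dots> \<le> (1 - \<bar>x\<bar>) / 2"
  proof -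
    have "0 \<le> (\<bar>x\<bar> - 1)^2" by simp
    moreover have "(\<bar>x\<bar> - 1)^2 = x^2 - 2 * \<bar>x\<bar> + 1" by (simp add: power2_eq_square algebra_simps)
    ultimately show ?thesis by simp
  qed
  finally show ?thesis unfolding hh_def .
qed




locale AH =
  fixes d T :: nat and y :: "nat \<Rightarrow> real" and ex :: "nat \<Rightarrow> nat \<Rightarrow> real"
  assumes yb: "\<forall>t<T. y t \<in> {-1, 1}" and exb: "\<forall>t<T. \<forall>j<d. ex t j \<in> {-1..1}" and d1: "d \<ge> 1"
begin

abbreviation "DD t \<equiv> ah_Delta d y ex t"
definition "gg t = ah_gap d y ex (DD t) t"
definition "hh t = (\<Sum>i<d. ah_p d y ex t i * loss (y t) (ex t i))"
definition "vv t = (\<Sum>i<d. ah_p d y ex t i * (hh t - loss (y t) (ex t i))^2)"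

lemma D_Suc: "DD (Suc t) = DD t + gg t" by (simp add: gg_def)

lemma inv: "t \<le> T \<Longrightarrow> 0 \<le> DD t \<and> (DD t = 0 \<longrightarrow> tied d y ex t) \<and> (DD t \<noteq> 0 \<longrightarrow> d \<ge> 2)"
proof (induction t)
  case 0
  then show ?case by (simp add: tied_def cumloss_0)
next
  case (Suc t)
  hence tT: "t < T" and IH: "0 \<le> DD t" "DD t = 0 \<Longrightarrow> tied d y ex t" "DD t \<noteq> 0 \<Longrightarrow> d \<ge> 2" by auto
  have RF: "0 \<le> gg t" "DD t = 0 \<and> gg t = 0 \<longrightarrow> tied d y ex (Suc t)" "DD t = 0 \<and> gg t \<noteq> 0 \<longrightarrow> d \<ge> 2"
    using round_facts[of y t d ex "DD t"] yb exb d1 IH tT unfolding gg_def by auto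
  show ?case using RF IH unfolding D_Suc by auto
qed

lemma rf:
  assumes "t < T"
  shows "0 \<le> gg t \<and> gg t \<le> 1 \<and> 2 * DD t * gg t \<le> ln (real d) * vv t + 2/3 * ln (real d) * gg t
    \<and> hh t - gg t \<le> Psi d (cumloss y ex (Suc t)) (DD t) - Psi d (cumloss y ex t) (DD t)"
  using round_facts[of y t d ex "DD t"] yb exb d1 inv[of t] assms
  unfolding gg_def hh_def vv_def ah_p_def by auto

lemma tele: "t \<le> T \<Longrightarrow> (\<Sum>s<t. hh s - gg s) \<le> Psi d (cumloss y ex t) (DD t)"
proof (induction t)
  case 0
  then show ?case using psi_zero0[OF d1, of y ex] by simp
next
  case (Suc t)
  hence tT: "t < T" by simp
  have "(\<Sum>s<Suc t. hh s - gg s) = (\<Sum>s<t. hh s - gg s) + (hh t - gg t)" by simp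
  also have "\<dots> \<le> Psi d (cumloss y ex (Suc t)) (DD t)"
    using Suc.IH tT rf[OF tT] by simp
  also have "\<dots> \<le> Psi d (cumloss y ex (Suc t)) (DD (Suc t))"
    using psi_mono[OF d1] inv[of t] inv[of "Suc t"] rf[OF tT] tT unfolding D_Suc by auto
  finally show ?case .
qed

lemma Dsum: "DD t = (\<Sum>s<t. gg s)"
  by (induction t) (simp_all del: ah_Delta.simps(2) add: D_Suc)

lemma sq: "t \<le> T \<Longrightarrow> (DD t)^2 \<le> ln (real d) * (\<Sum>s<t. vv s) + (2/3 * ln (real d) + 1) * DD t"
proof (induction t)
  case 0
  then show ?case by simp
next
  case (Suc t)
  hence tT: "t < T" by simp
  have R: "0 \<le> gg t" "gg t \<le> 1" "2 * DD t * gg t \<le> ln (real d) * vv t + 2/3 * ln (real d) * gg t"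
    using rf[OF tT] by auto
  have g2: "(gg t)^2 \<le> gg t" using R by (simp add: power2_eq_square mult_left_le_one_le)
  have "(DD (Suc t))^2 = (DD t)^2 + 2 * DD t * gg t + (gg t)^2"
    unfolding D_Suc by (simp add: power2_eq_square algebra_simps)
  also have "\<dots> \<le> (ln (real d) * (\<Sum>s<t. vv s) + (2/3 * ln (real d) + 1) * DD t)
      + (ln (real d) * vv t + 2/3 * ln (real d) * gg t) + gg t"
    using Suc.IH tT R g2 by linarith
  also have "\<dots> = ln (real d) * (\<Sum>s<Suc t. vv s) + (2/3 * ln (real d) + 1) * DD (Suc t)"
    unfolding D_Suc by (simp add: algebra_simps)
  finally show ?case .
qed

lemma regret:
  assumes i: "i < d"
  shows "(\<Sum>t<T. hh t) \<le> cumloss y ex T i + 2 * (sqrt (ln (real d) * (\<Sum>t<T. vv t)) + 2/3 * ln (real d) + 1)"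
proof -
  have "(\<Sum>t<T. hh t) = (\<Sum>t<T. hh t - gg t) + DD T" unfolding Dsum by (simp add: sum_subtractf)
  also have "\<dots> \<le> Psi d (cumloss y ex T) (DD T) + DD T" using tele[of T] by simp
  also have "\<dots> \<le> cumloss y ex T i + 2 * DD T"
    using psi_upper[of "DD T" d i "cumloss y ex T"] inv[of T] i by auto
  also have "DD T \<le> sqrt (ln (real d) * (\<Sum>t<T. vv t)) + (2/3 * ln (real d) + 1)"
  proof (rule sqrt_bound)
    show "0 \<le> DD T" using inv[of T] by simp
    show "0 \<le> ln (real d) * (\<Sum>t<T. vv t)" unfolding vv_def
      using d1 weights_prob inv by (intro mult_nonneg_nonneg sum_nonneg) (auto simp: ah_p_def)
    show "0 \<le> 2/3 * ln (real d) + 1" using d1 by simp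
    show "(DD T)^2 \<le> ln (real d) * (\<Sum>t<T. vv t) + (2/3 * ln (real d) + 1) * DD T" using sq by simp
  qed
  finally show ?thesis by (simp add: algebra_simps)
qed

lemma pprob: "t < T \<Longrightarrow> (\<forall>i. 0 \<le> ah_p d y ex t i) \<and> (\<Sum>i<d. ah_p d y ex t i) = 1"
  using weights_prob[of "DD t" d y ex t] inv[of t] d1 unfolding ah_p_def by auto

lemma round_link:
  assumes tT: "t < T" and c0: "0 \<le> c"
  shows "(1 - abst d y ex t) * loss (y t) (ystar d y ex t) + abst d y ex t * c = hh t - abst d y ex t * (1/2 - c)"
    and "vt d y ex t = vv t" and "vv t \<le> abst d y ex t / 2" and "0 \<le> abst d y ex t"
proof -
  have P: "\<forall>i. 0 \<le> ah_p d y ex t i" "(\<Sum>i<d. ah_p d y ex t i) = 1" using pprob[OF tT] by auto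
  have yt: "y t \<in> {-1, 1}" using yb tT by auto
  have exb': "\<forall>j<d. \<bar>ex t j\<bar> \<le> 1" using exb tT by (auto simp: abs_le_iff)
  have ya: "\<bar>yhat d y ex t\<bar> \<le> 1"
  proof -
    have "\<bar>yhat d y ex t\<bar> \<le> (\<Sum>i<d. \<bar>ah_p d y ex t i * ex t i\<bar>)" unfolding yhat_def by (rule sum_abs)
    also have "\<dots> \<le> (\<Sum>i<d. ah_p d y ex t i * 1)"
      using P exb' by (intro sum_mono) (auto simp: abs_mult intro: mult_right_le_one_le)
    finally show ?thesis using P by simp
  qed
  have lh: "loss (y t) (yhat d y ex t) = hh t"
  proof -
    have "hh t = (\<Sum>i<d. ah_p d y ex t i / 2 - y t / 2 * (ah_p d y ex t i * ex t i))"
      unfolding hh_def loss_def by (intro sum.cong refl) (simp add: field_simps)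
    also have "\<dots> = 1/2 - y t / 2 * yhat d y ex t"
      unfolding yhat_def by (simp add: sum_subtractf sum_distrib_left[symmetric] sum_divide_distrib[symmetric] P)
    finally show ?thesis unfolding loss_def by (simp add: field_simps)
  qed
  show "(1 - abst d y ex t) * loss (y t) (ystar d y ex t) + abst d y ex t * c = hh t - abst d y ex t * (1/2 - c)"
    using abst_eq[OF yt ya, of c] unfolding abst_def ystar_def lh by simp
  show vv: "vt d y ex t = vv t" unfolding vt_def vv_def lh by simp
  have l01: "\<forall>i<d. 0 \<le> loss (y t) (ex t i) \<and> loss (y t) (ex t i) \<le> 1" using loss01 yt exb tT by blast
  show "vv t \<le> abst d y ex t / 2"
    using var_bound[OF yt, of d "ah_p d y ex t" "\<lambda>i. loss (y t) (ex t i)" "yhat d y ex t"] P l01 lh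
    unfolding vv_def abst_def hh_def by auto
  show "0 \<le> abst d y ex t" using ya unfolding abst_def by simp
qed

end




theorem mainTheorem10:
  fixes d T i :: nat and y :: "nat \<Rightarrow> real" and ex :: "nat \<Rightarrow> nat \<Rightarrow> real" and c :: "nat \<Rightarrow> real"
  assumes "\<forall>t<T. y t \<in> {-1, 1}"
    and "\<forall>t<T. \<forall>j<d. ex t j \<in> {-1..1}"
    and "\<forall>t<T. 0 \<le> c t"
    and "0 < T"
    and "Max (c ` {..<T}) < 1/2"
    and "i < d"
  shows "(\<Sum>t<T. (1 - abst d y ex t) * loss (y t) (ystar d y ex t) + abst d y ex t * c t)
    \<le> (\<Sum>t<T. loss (y t) (ex t i))
       + min (ln (real d) / (1 - 2 * Max (c ` {..<T}))) (2 * sqrt (ln (real d) * (\<Sum>t<T. vt d y ex t)))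
       + 4/3 * ln (real d) + 2"
proof -
  have d1: "d \<ge> 1" using assms(6) by simp
  interpret AH d T y ex using assms(1,2) d1 by unfold_locales auto
  define cm where "cm = Max (c ` {..<T})"
  define B where "B = (\<Sum>t<T. abst d y ex t)"
  define V where "V = (\<Sum>t<T. vv t)"
  define H where "H = (\<Sum>t<T. hh t)"
  define Lx where "Lx = (\<Sum>t<T. loss (y t) (ex t i))"
  define A where "A = (\<Sum>t<T. (1 - abst d y ex t) * loss (y t) (ystar d y ex t) + abst d y ex t * c t)"
  have cle: "c t \<le> cm" if "t < T" for t unfolding cm_def using that by (intro Max_ge) auto
  have cm0: "0 \<le> cm" using cle[of 0] assms(3,4) by force
  have cmh: "cm < 1/2" using assms(5) unfolding cm_def .
  have lnd: "0 \<le> ln (real d)" using d1 by simp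
  have A_eq: "A = (\<Sum>t<T. hh t - abst d y ex t * (1/2 - c t))"
    unfolding A_def using round_link(1) assms(3) by (intro sum.cong refl) auto
  have A_le: "A \<le> H - (1/2 - cm) * B"
  proof -
    have "(\<Sum>t<T. abst d y ex t * (1/2 - cm)) \<le> (\<Sum>t<T. abst d y ex t * (1/2 - c t))"
      using round_link(4) assms(3) cle by (intro sum_mono mult_left_mono) auto
    moreover have "(\<Sum>t<T. abst d y ex t * (1/2 - cm)) = (1/2 - cm) * B" unfolding B_def by (simp add: sum_distrib_left mult.commute)
    ultimately show ?thesis unfolding A_eq H_def by (simp add: sum_subtractf)
  qed
  have Vt: "(\<Sum>t<T. vt d y ex t) = V" unfolding V_def using round_link(2) assms(3) by (intro sum.cong refl) auto
  have VB: "V \<le> B / 2" unfolding V_def B_def using round_link(3) assms(3)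
    by (simp add: sum_divide_distrib) (intro sum_mono, auto)
  have B0: "0 \<le> B" unfolding B_def using round_link(4) assms(3) by (intro sum_nonneg) auto
  have Lx_eq: "Lx = cumloss y ex T i" unfolding Lx_def cumloss_def ..
  have reg: "H \<le> Lx + 2 * (sqrt (ln (real d) * V) + 2/3 * ln (real d) + 1)"
    unfolding H_def V_def Lx_eq using regret[OF assms(6)] .
  have b1: "A \<le> Lx + 2 * sqrt (ln (real d) * V) + 4/3 * ln (real d) + 2"
  proof -
    have "0 \<le> (1/2 - cm) * B" using cmh B0 by simp
    thus ?thesis using A_le reg by simp
  qed
  have b2: "A \<le> Lx + ln (real d) / (1 - 2 * cm) + 4/3 * ln (real d) + 2"
  proof -
    define k where "k = 1 - 2 * cm"
    have k0: "0 < k" using cmh unfolding k_def by simp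
    have "2 * sqrt (ln (real d) * V) \<le> 2 * sqrt (ln (real d) * (B / 2))"
    proof -
      have "ln (real d) * V \<le> ln (real d) * (B / 2)" using VB lnd by (rule mult_left_mono)
      thus ?thesis by simp
    qed
    also have "\<dots> \<le> ln (real d) / k + k * (B / 2)"
      using amgm_bound[OF lnd _ k0, of "B/2"] B0 by simp
    finally have "2 * sqrt (ln (real d) * V) \<le> ln (real d) / k + k * (B / 2)" .
    moreover have "(1/2 - cm) * B = k * (B / 2)" unfolding k_def by (simp add: algebra_simps)
    ultimately have f: "2 * sqrt (ln (real d) * V) \<le> ln (real d) / k + (1/2 - cm) * B" by (simp only:)
    have ff: "2 * sqrt (ln (real d) * V) \<le> ln (real d) / (1 - 2 * cm) + (1/2 - cm) * B" using f unfolding k_def .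
    show ?thesis
    proof -
      obtain s1 q X where "s1 = 2 * sqrt (ln (real d) * V)" "q = ln (real d) / (1 - 2 * cm)" "X = (1/2 - cm) * B" by blast
      hence "s1 \<le> q + X" "A \<le> H - X" "H \<le> Lx + (s1 + 4/3 * ln (real d) + 2)"
        using ff A_le reg by (auto simp: algebra_simps)
      thus ?thesis using \<open>q = _\<close> by linarith
    qed
  qed
  show ?thesis
    using b1 b2 unfolding A_def[symmetric] Lx_def[symmetric] cm_def[symmetric] Vt
    by (simp add: min_def)
qed


end
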